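(* Let $L>0$. Then (i) $\Psi_2(x;L)\le \exp(x^2)-1$ for all $x\ge 0$; and (ii) $\Psi_2(x;L)\ge \Psi_1(x;L/3)$ for all $x\ge 0$.
   Context: For $x\ge 0$ let $h_1(x)=1+x-\sqrt{1+2x}$ and $h_2(x)=(1+x)\log(1+x)-x$. For $L>0$ define $\Psi_1(x;L)=\exp\big(\frac{2}{L^2}h_1(Lx)\big)-1$ (the Bernstein–Orlicz function) and $\Psi_2(x;L)=\exp\big(\frac{2}{L^2}h_2(Lx)\big)-1$ (the Bennett–Orlicz function), $x\ge 0$. *)

theory Defs
  imports Complex_Main
begin

definition h1 :: "real \<Rightarrow> real" where
  "h1 x = 1 + x - sqrt (1 + 2 * x)"

definition h2 :: "real \<Rightarrow> real" where
  "h2 x = (1 + x) * ln (1 + x) - x"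

definition Psi1 :: "real \<Rightarrow> real \<Rightarrow> real" where
  "Psi1 x L = exp ((2 / L^2) * h1 (L * x)) - 1"

definition Psi2 :: "real \<Rightarrow> real \<Rightarrow> real" where
  "Psi2 x L = exp ((2 / L^2) * h2 (L * x)) - 1"

end

theory Submission
  imports Defs
begin

lemma aux: "(a::real) > 0 \<Longrightarrow> inverse (sqrt a) / a = 1 / sqrt a ^ 3"
proof -
  assume a: "a > 0"
  have "sqrt a ^ 3 = sqrt a * a" using a by (simp add: power3_eq_cube)
  thus ?thesis by (simp add: divide_inverse)
qed

lemma d1: "t \<ge> (0::real) \<Longrightarrow> ((\<lambda>y::real. y^2/2 - ((1 + y) * ln (1 + y) - y)) has_real_derivative (t - ln (1 + t))) (at t)"
  apply (rule derivative_eq_intros refl | simp)+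
  done

lemma d2: "t \<ge> (0::real) \<Longrightarrow> ((\<lambda>y::real. ln (1 + y) - 3 + 3 / sqrt (1 + 2*y/3)) has_real_derivative (1/(1+t) - 1/(sqrt (1 + 2*t/3))^3)) (at t)"
  apply (rule derivative_eq_intros refl | simp)+
  apply (rule aux) apply simp
  done

lemma d3: "t \<ge> (0::real) \<Longrightarrow> ((\<lambda>y::real. (1 + y) * ln (1 + y) - y - 9 - 3*y + 9 * sqrt (1 + 2*y/3)) has_real_derivative (ln (1 + t) - 3 + 3 / sqrt (1 + 2*t/3))) (at t)"
  apply (rule derivative_eq_intros refl | simp)+
  apply (simp only: divide_inverse)
  done

lemma h2_upper:
  fixes y :: real assumes "y \<ge> 0" shows "2 * h2 y \<le> y^2"
proof -
  let ?f = "\<lambda>y::real. y^2/2 - ((1 + y) * ln (1 + y) - y)"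
  have "?f 0 \<le> ?f y"
  proof (rule DERIV_nonneg_imp_nondecreasing[OF assms])
    fix t :: real assume t0: "0 \<le> t" and t1: "t \<le> y"
    note t = t0 t1
    have "(?f has_real_derivative (t - ln (1 + t))) (at t)"
      using t by (intro d1) simp
    moreover have "t - ln (1 + t) \<ge> 0" using ln_add_one_self_le_self[of t] t by simp
    ultimately show "\<exists>d. (?f has_real_derivative d) (at t) \<and> d \<ge> 0" by blast
  qed
  thus ?thesis by (simp add: h2_def)
qed



lemma s_cube:
  fixes y :: real assumes "y \<ge> 0"
  shows "sqrt (1 + 2*y/3) ^ 3 \<ge> 1 + y"
proof -
  let ?s = "sqrt (1 + 2*y/3)"
  have s2: "?s^2 = 1 + 2*y/3" using assms by simp
  have "(?s^3)^2 = (?s^2)^3" by (metis power_mult mult.commute)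
  also have "\<dots> = (1 + 2*y/3)^3" using s2 by simp
  also have "\<dots> = (1+y)^2 + y^2/3 + 8*y^3/27" by (simp add: power2_eq_square power3_eq_cube field_simps)
  also have "\<dots> \<ge> (1+y)^2" using assms by simp
  finally have "(1+y)^2 \<le> (?s^3)^2" .
  thus ?thesis by (rule power2_le_imp_le) (use assms in simp)
qed

lemma gprime_nonneg:
  fixes y :: real assumes "y \<ge> 0"
  shows "ln (1 + y) - 3 + 3 / sqrt (1 + 2*y/3) \<ge> 0"
proof -
  let ?g = "\<lambda>y::real. ln (1 + y) - 3 + 3 / sqrt (1 + 2*y/3)"
  have "?g 0 \<le> ?g y"
  proof (rule DERIV_nonneg_imp_nondecreasing[OF assms])
    fix t :: real assume t0: "0 \<le> t" and t1: "t \<le> y"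
    note t = t0 t1
    let ?s = "sqrt (1 + 2*t/3)"
    have sp: "?s > 0" using t by simp
    have "(?g has_real_derivative (1/(1+t) - 1/?s^3)) (at t)"
      using t by (intro d2) simp
    moreover have "1/(1+t) - 1/?s^3 \<ge> 0"
    proof -
      have "1/?s^3 \<le> 1/(1+t)"
        by (rule divide_left_mono) (use s_cube[of t] t sp in auto)
      thus ?thesis by simp
    qed
    ultimately show "\<exists>d. (?g has_real_derivative d) (at t) \<and> d \<ge> 0" by blast
  qed
  thus ?thesis by simp
qed

lemma h2_lower:
  fixes y :: real assumes "y \<ge> 0" shows "9 * h1 (y/3) \<le> h2 y"
proof -
  let ?g = "\<lambda>y::real. (1 + y) * ln (1 + y) - y - 9 - 3*y + 9 * sqrt (1 + 2*y/3)"
  have "?g 0 \<le> ?g y"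
  proof (rule DERIV_nonneg_imp_nondecreasing[OF assms])
    fix t :: real assume t0: "0 \<le> t" and t1: "t \<le> y"
    note t = t0 t1
    let ?s = "sqrt (1 + 2*t/3)"
    have sp: "?s > 0" using t by simp
    have "(?g has_real_derivative (ln (1 + t) - 3 + 3 / ?s)) (at t)"
      using t by (intro d3) simp
    moreover have "ln (1 + t) - 3 + 3 / ?s \<ge> 0" by (rule gprime_nonneg) (use t in simp)
    ultimately show "\<exists>d. (?g has_real_derivative d) (at t) \<and> d \<ge> 0" by blast
  qed
  moreover have "1 + 2 * (y/3) = 1 + 2*y/3" by simp
  ultimately show ?thesis by (simp add: h1_def h2_def algebra_simps)
qed

theorem proposition3:
  fixes L :: real
  assumes "L > 0"
  shows "(\<forall>x::real. x \<ge> 0 \<longrightarrow> Psi2 x L \<le> exp (x^2) - 1) \<and>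
         (\<forall>x::real. x \<ge> 0 \<longrightarrow> Psi2 x L \<ge> Psi1 x (L / 3))"
proof safe
  fix x :: real assume x: "x \<ge> 0"
  have y: "L*x \<ge> 0" using x assms by simp
  have "(2 / L^2) * h2 (L*x) \<le> x^2"
    using h2_upper[OF y] assms by (simp add: field_simps power_mult_distrib)
  thus "Psi2 x L \<le> exp (x^2) - 1" by (simp add: Psi2_def)
next
  fix x :: real assume x: "x \<ge> 0"
  have y: "L*x \<ge> 0" using x assms by simp
  have e: "L / 3 * x = L*x/3" by simp
  have "(2 / (L/3)^2) * h1 (L/3*x) \<le> (2 / L^2) * h2 (L*x)"
    using h2_lower[OF y] assms unfolding e by (simp add: field_simps power2_eq_square)
  thus "Psi1 x (L/3) \<le> Psi2 x L" by (simp add: Psi2_def Psi1_def)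
qed

end
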